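(* Let $q=2$, $1\leq r\leq 2m-1$, and let $s$ be an integer with $1<s\leq 2m-r$. Let $f$ be a symplectic basis function of degree $s$ and class $(0,\sigma,\tau,\upsilon)$, where $\sigma=\min\{2m-r-s+\delta(m>r)(m-r),\lfloor s/2\rfloor\}$, $\tau=s-2\sigma$, $\upsilon=m-\sigma-\tau$. Then: (a) if $\sigma<s/2-1$, there exists $g\in\mathbf F_2\operatorname{Sp}(V)$ such that $gf$ is of class $(0,\sigma+1,\tau-3,\upsilon+2)$; (b) if $\sigma=s/2-1$ or $\sigma=(s-1)/2$, there exists $g\in\mathbf F_2\operatorname{Sp}(V)$ such that $gf$ is of class $(0,\sigma,\tau-1,\upsilon+1)$; (c) if $\sigma=s/2$, there exists $g\in\mathbf F_2\operatorname{Sp}(V)$ such that $gf$ is of class $(0,\sigma-1,\tau+1,\upsilon)$.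
   Context: $k=\mathbf F_2$. $V$ is a $2m$-dimensional $k$-space with nondegenerate alternating form and symplectic basis with coordinate functions $x_1,\dots,x_m,y_m,\dots,y_1$; $\operatorname{Sp}(V)$ acts on functions $V\to k$ by linear substitution (note $x_i^2=x_i$ as functions), extended linearly to the group ring. $\delta(P)=1$ if $P$ holds and $0$ otherwise. In $k[X_1,\dots,X_m,Y_1,\dots,Y_m]$ put $W_i=X_iY_i$ and let $Z_i$ denote $X_i$ or $Y_i$. A square-free homogeneous polynomial $F$ is of class $(\rho,\sigma,\tau,\upsilon)$ if there is a partition of $\{1,\dots,m\}$ into $R=\{r_1,\dots,r_\rho\}$, $R'=\{r'_1,\dots,r'_\rho\}$, $S,T,U$ with $|S|=\sigma,|T|=\tau,|U|=\upsilon$ and $F=\prod_{i=1}^\rho(W_{r_i}+W_{r'_i})\prod_{i\in S}W_i\prod_{i\in T}Z_i$ (degree $2\rho+2\sigma+\tau$); a function is of that class if it equals $\phi(F')$ for some $F'$ of that class, where $\phi$ is evaluation $X_i\mapsto x_i,Y_i\mapsto y_i$. $P^\lambda_\ell$ is the set of such polynomials with $2\rho+2\sigma+\tau=\lambda$ and $\sigma\leq\ell$; choose $B^\lambda_0\subseteq P^\lambda_0$ maximal linearly independent and inductively $B^\lambda_\ell=B^\lambda_{\ell-1}\cup P'^\lambda_\ell$ ($P'^\lambda_\ell\subseteq P^\lambda_\ell$) a basis of the span of $P^\lambda_\ell$. For $q=2$ a symplectic basis function of degree $\lambda$ is $\phi(F)$ with $F\in B^\lambda_{\lfloor\lambda/2\rfloor}$.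 *)

theory Defs
  imports Complex_Main "HOL-Library.Z2"
begin

text \<open>The field k = F_2 is the type bit. A vector of V (dim 2m) is a pair (x,y) of
coordinate functions, x i = x_i(v), y i = y_i(v) for i in {1..m}, zero elsewhere.\<close>

type_synonym vec = "(nat \<Rightarrow> bit) \<times> (nat \<Rightarrow> bit)"

definition Vsp :: "nat \<Rightarrow> vec set" where
  "Vsp m = {v. \<forall>i. (i = 0 \<or> m < i) \<longrightarrow> fst v i = 0 \<and> snd v i = 0}"

definition vadd :: "vec \<Rightarrow> vec \<Rightarrow> vec" where
  "vadd u v = (\<lambda>i. fst u i + fst v i, \<lambda>i. snd u i + snd v i)"

text \<open>The nondegenerate alternating form with symplectic basis e_1..e_m, f_m..f_1
(dual coordinates x_i, y_i).\<close>
definition sform :: "nat \<Rightarrow> vec \<Rightarrow> vec \<Rightarrow> bit" where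
  "sform m u v = (\<Sum>i\<in>{1..m}. fst u i * snd v i + snd u i * fst v i)"

text \<open>Sp(V): bijective additive (= F_2-linear) maps of V preserving the form,
extended by the identity outside V so that each group element is a unique HOL function.\<close>
definition Sp :: "nat \<Rightarrow> (vec \<Rightarrow> vec) set" where
  "Sp m = {h. bij_betw h (Vsp m) (Vsp m)
              \<and> (\<forall>u\<in>Vsp m. \<forall>v\<in>Vsp m. h (vadd u v) = vadd (h u) (h v))
              \<and> (\<forall>u\<in>Vsp m. \<forall>v\<in>Vsp m. sform m (h u) (h v) = sform m u v)
              \<and> (\<forall>v. v \<notin> Vsp m \<longrightarrow> h v = v)}"

text \<open>Action of the group ring F_2 Sp(V) (elements = coefficient functions Sp(V) \<rightarrow> F_2)
on functions V \<rightarrow> F_2: h acts by linear substitution (h f)(v) = f(h^{-1} v).\<close>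
definition gr_act :: "nat \<Rightarrow> ((vec \<Rightarrow> vec) \<Rightarrow> bit) \<Rightarrow> (vec \<Rightarrow> bit) \<Rightarrow> (vec \<Rightarrow> bit)" where
  "gr_act m g f = (\<lambda>v. \<Sum>h\<in>Sp m. g h * f (inv_into (Vsp m) h v))"

text \<open>Polynomials in k[X_1..X_m,Y_1..Y_m]: a variable is (False,i) = X_i or (True,i) = Y_i;
a square-free monomial is a finite set of variables; a polynomial over F_2 is the
finite set of monomials with coefficient 1.\<close>
type_synonym var = "bool \<times> nat"
type_synonym mono = "var set"
type_synonym poly = "mono set"

definition Wv :: "nat \<Rightarrow> mono" where
  "Wv i = {(False, i), (True, i)}"

text \<open>F = prod_{i<rho} (W_{r i} + W_{r' i}) * prod_{i in S} W_i * prod_{i in T} Z_i,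
where Z_i = X_i if z i = False and Y_i if z i = True. Expanding the product
(all factors in disjoint variables) gives the set of monomials below.\<close>
definition classpoly :: "nat \<Rightarrow> nat \<Rightarrow> nat \<Rightarrow> nat \<Rightarrow> nat \<Rightarrow> poly \<Rightarrow> bool" where
  "classpoly m \<rho> \<sigma> \<tau> \<upsilon> F \<longleftrightarrow>
     (\<exists>r r' S T U (z :: nat \<Rightarrow> bool).
        inj_on r {..<\<rho>} \<and> inj_on r' {..<\<rho>} \<and>
        r ` {..<\<rho>} \<inter> r' ` {..<\<rho>} = {} \<and>
        r ` {..<\<rho>} \<inter> S = {} \<and> r ` {..<\<rho>} \<inter> T = {} \<and> r ` {..<\<rho>} \<inter> U = {} \<and>
        r' ` {..<\<rho>} \<inter> S = {} \<and> r' ` {..<\<rho>} \<inter> T = {} \<and> r' ` {..<\<rho>} \<inter> U = {} \<and>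
        S \<inter> T = {} \<and> S \<inter> U = {} \<and> T \<inter> U = {} \<and>
        r ` {..<\<rho>} \<union> r' ` {..<\<rho>} \<union> S \<union> T \<union> U = {1..m} \<and>
        card S = \<sigma> \<and> card T = \<tau> \<and> card U = \<upsilon> \<and>
        F = {M. \<exists>c :: nat \<Rightarrow> bool.
               M = (\<Union>i<\<rho>. Wv (if c i then r i else r' i)) \<union> (\<Union>i\<in>S. Wv i)
                   \<union> {(z i, i) | i. i \<in> T}})"

definition coord :: "var \<Rightarrow> vec \<Rightarrow> bit" where
  "coord w v = (if fst w then snd v (snd w) else fst v (snd w))"

definition phi :: "poly \<Rightarrow> vec \<Rightarrow> bit" where
  "phi F v = (\<Sum>M\<in>F. \<Prod>w\<in>M. coord w v)"

definition fun_of_class :: "nat \<Rightarrow> nat \<Rightarrow> nat \<Rightarrow> nat \<Rightarrow> nat \<Rightarrow> (vec \<Rightarrow> bit) \<Rightarrow> bool" where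
  "fun_of_class m \<rho> \<sigma> \<tau> \<upsilon> f \<longleftrightarrow>
     (\<exists>F. classpoly m \<rho> \<sigma> \<tau> \<upsilon> F \<and> (\<forall>v\<in>Vsp m. f v = phi F v))"

definition Pset :: "nat \<Rightarrow> nat \<Rightarrow> nat \<Rightarrow> poly set" where
  "Pset m lam l = {F. \<exists>\<rho> \<sigma> \<tau> \<upsilon>. classpoly m \<rho> \<sigma> \<tau> \<upsilon> F \<and> 2*\<rho> + 2*\<sigma> + \<tau> = lam \<and> \<sigma> \<le> l}"

text \<open>Linear algebra over F_2 in the polynomial ring: sums are symmetric differences.\<close>
definition psum :: "poly set \<Rightarrow> poly" where
  "psum A = {M. odd (card {F\<in>A. M \<in> F})}"

definition plin_indep :: "poly set \<Rightarrow> bool" where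
  "plin_indep A \<longleftrightarrow> (\<forall>A'. A' \<subseteq> A \<and> finite A' \<and> A' \<noteq> {} \<longrightarrow> psum A' \<noteq> {})"

definition pspan :: "poly set \<Rightarrow> poly set" where
  "pspan A = {psum A' | A'. A' \<subseteq> A \<and> finite A'}"

definition basis_chain :: "nat \<Rightarrow> nat \<Rightarrow> nat \<Rightarrow> (nat \<Rightarrow> poly set) \<Rightarrow> bool" where
  "basis_chain m lam L B \<longleftrightarrow>
     B 0 \<subseteq> Pset m lam 0 \<and> plin_indep (B 0) \<and>
     (\<forall>F \<in> Pset m lam 0 - B 0. \<not> plin_indep (insert F (B 0))) \<and>
     (\<forall>l\<in>{1..L}. \<exists>P'. P' \<subseteq> Pset m lam l \<and> B l = B (l - 1) \<union> P' \<and>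
                      plin_indep (B l) \<and> pspan (B l) = pspan (Pset m lam l))"

definition sympl_basis_fun :: "nat \<Rightarrow> nat \<Rightarrow> (vec \<Rightarrow> bit) \<Rightarrow> bool" where
  "sympl_basis_fun m lam f \<longleftrightarrow>
     (\<exists>B F. basis_chain m lam (lam div 2) B \<and> F \<in> B (lam div 2) \<and> (\<forall>v\<in>Vsp m. f v = phi F v))"

end

theory Submission
  imports Defs "HOL-Library.FuncSet"
begin

declare add_bit_eq_xor[simp del] mult_bit_eq_and[simp del]

definition Wc :: "(nat \<Rightarrow> bool) \<Rightarrow> vec \<Rightarrow> nat \<Rightarrow> bit" where
  "Wc z v i = (if z i then snd v i else fst v i)"
definition Wd :: "(nat \<Rightarrow> bool) \<Rightarrow> vec \<Rightarrow> nat \<Rightarrow> bit" where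
  "Wd z v i = (if z i then fst v i else snd v i)"
definition mk :: "(nat \<Rightarrow> bool) \<Rightarrow> (nat \<Rightarrow> bit) \<Rightarrow> (nat \<Rightarrow> bit) \<Rightarrow> vec" where
  "mk z A B = (\<lambda>i. if z i then B i else A i, \<lambda>i. if z i then A i else B i)"

lemma Wc_mk[simp]: "Wc z (mk z A B) i = A i" by (simp add: Wc_def mk_def)
lemma Wd_mk[simp]: "Wd z (mk z A B) i = B i" by (simp add: Wd_def mk_def)
lemma vec_eqI: assumes "\<And>i. Wc z u i = Wc z v i" "\<And>i. Wd z u i = Wd z v i" shows "u = v"
proof -
  have "fst u i = fst v i \<and> snd u i = snd v i" for i
    using assms(1)[of i] assms(2)[of i] by (auto simp: Wc_def Wd_def split: if_splits)
  then show ?thesis by (simp add: prod_eq_iff fun_eq_iff)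
qed
lemma W0_iff: "(Wc z v i = 0 \<and> Wd z v i = 0) \<longleftrightarrow> (fst v i = 0 \<and> snd v i = 0)"
  by (cases "z i") (auto simp: Wc_def Wd_def)
lemma Vsp_iff: "v \<in> Vsp m \<longleftrightarrow> (\<forall>i. (i = 0 \<or> m < i) \<longrightarrow> Wc z v i = 0 \<and> Wd z v i = 0)"
  unfolding W0_iff Vsp_def by simp
lemma Wc_vadd[simp]: "Wc z (vadd u v) i = Wc z u i + Wc z v i"
  by (simp add: Wc_def vadd_def)
lemma Wd_vadd[simp]: "Wd z (vadd u v) i = Wd z u i + Wd z v i"
  by (simp add: Wd_def vadd_def)
lemma sform_W: "sform m u v = (\<Sum>i\<in>{1..m}. Wc z u i * Wd z v i + Wd z u i * Wc z v i)"
  unfolding sform_def by (rule sum.cong) (auto simp: Wc_def Wd_def)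
lemma bit_add_self[simp]: "(x::bit) + x = 0" by (cases x) auto
lemma bit_mult_self[simp]: "(x::bit) * x = x" by (cases x) auto
lemma pr_eq: "fst v i * snd v i = Wc z v i * Wd z v i"
  by (simp add: Wc_def Wd_def mult.commute)
lemma coord_W: "coord (z i, i) v = Wc z v i"
  by (simp add: coord_def Wc_def)
lemma coord_Wn: "coord (\<not> z i, i) v = Wd z v i"
  by (simp add: coord_def Wd_def)

lemma vadd_Vsp: "u \<in> Vsp m \<Longrightarrow> v \<in> Vsp m \<Longrightarrow> vadd u v \<in> Vsp m"
  by (simp add: Vsp_def vadd_def)

lemma Sp_intro:
  assumes "\<And>v. v \<in> Vsp m \<Longrightarrow> h v \<in> Vsp m"
    and "\<And>v. v \<in> Vsp m \<Longrightarrow> h (h v) = v"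
    and "\<And>u v. u \<in> Vsp m \<Longrightarrow> v \<in> Vsp m \<Longrightarrow> h (vadd u v) = vadd (h u) (h v)"
    and "\<And>u v. u \<in> Vsp m \<Longrightarrow> v \<in> Vsp m \<Longrightarrow> sform m (h u) (h v) = sform m u v"
    and "\<And>v. v \<notin> Vsp m \<Longrightarrow> h v = v"
  shows "h \<in> Sp m"
proof -
  have "bij_betw h (Vsp m) (Vsp m)"
    apply (rule bij_betw_byWitness[where f'=h])
    using assms(1,2) by auto
  then show ?thesis unfolding Sp_def mem_Collect_eq
    using assms(3,4,5) by blast
qed


lemma bit_add_cancel[simp]: "(x::bit) + y + y = x" by (cases y) auto

lemma form_aux:
  fixes m a b :: nat
  assumes "a \<in> {1..m}" "b \<in> {1..m}"
    and "\<And>i. t' i = t i + (if i = a then X else 0) + (if i = b then X else 0)"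
  shows "(\<Sum>i\<in>{1..m}. t' i) = (\<Sum>i\<in>{1..m}. (t i :: bit))"
proof -
  have "(\<Sum>i\<in>{1..m}. t' i) = (\<Sum>i\<in>{1..m}. t i + (if i = a then X else 0) + (if i = b then X else 0))"
    by (rule sum.cong[OF refl]) (rule assms(3))
  also have "\<dots> = (\<Sum>i\<in>{1..m}. t i) + (\<Sum>i\<in>{1..m}. if i = a then X else 0)
          + (\<Sum>i\<in>{1..m}. if i = b then X else 0)"
    by (simp only: sum.distrib)
  also have "\<dots> = (\<Sum>i\<in>{1..m}. t i) + X + X"
    unfolding sum.delta[OF finite_atLeastAtMost] using assms(1,2) by simp
  also have "\<dots> = (\<Sum>i\<in>{1..m}. t i)" by simp
  finally show ?thesis .
qed

definition Em :: "nat \<Rightarrow> (nat \<Rightarrow> bool) \<Rightarrow> nat \<Rightarrow> nat \<Rightarrow> vec \<Rightarrow> vec" where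
  "Em m z a b v = (if v \<in> Vsp m then mk z ((Wc z v)(a := Wc z v a + Wc z v b))
                      ((Wd z v)(b := Wd z v b + Wd z v a)) else v)"
definition Pd :: "nat \<Rightarrow> (nat \<Rightarrow> bool) \<Rightarrow> nat \<Rightarrow> vec \<Rightarrow> vec" where
  "Pd m z a v = (if v \<in> Vsp m then mk z ((Wc z v)(a := Wc z v a + Wd z v a)) (Wd z v) else v)"
definition Po :: "nat \<Rightarrow> (nat \<Rightarrow> bool) \<Rightarrow> nat \<Rightarrow> nat \<Rightarrow> vec \<Rightarrow> vec" where
  "Po m z a b v = (if v \<in> Vsp m then mk z ((Wc z v)(a := Wc z v a + Wd z v b, b := Wc z v b + Wd z v a))
                      (Wd z v) else v)"

context
  fixes m :: nat and z :: "nat \<Rightarrow> bool" and a b :: nat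
  assumes a: "a \<in> {1..m}" and b: "b \<in> {1..m}" and ab: "a \<noteq> b"
begin

lemma Wc_Em[simp]: "v \<in> Vsp m \<Longrightarrow> Wc z (Em m z a b v) i = (if i = a then Wc z v a + Wc z v b else Wc z v i)"
  by (simp add: Em_def)
lemma Wd_Em[simp]: "v \<in> Vsp m \<Longrightarrow> Wd z (Em m z a b v) i = (if i = b then Wd z v b + Wd z v a else Wd z v i)"
  by (simp add: Em_def)
lemma Em_Vsp[simp]: "v \<in> Vsp m \<Longrightarrow> Em m z a b v \<in> Vsp m"
  using a b by (subst Vsp_iff[where z=z]) (auto simp: Vsp_iff[where z=z, of v])

lemma Em_Sp: "Em m z a b \<in> Sp m"
proof (rule Sp_intro)
  fix v assume v: "v \<in> Vsp m"
  show "Em m z a b (Em m z a b v) = v"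
    by (rule vec_eqI[where z=z]) (use v ab in auto)
next
  fix u v assume u: "u \<in> Vsp m" and v: "v \<in> Vsp m"
  show "Em m z a b (vadd u v) = vadd (Em m z a b u) (Em m z a b v)"
    by (rule vec_eqI[where z=z]) (use u v vadd_Vsp in \<open>auto simp: algebra_simps\<close>)
  show "sform m (Em m z a b u) (Em m z a b v) = sform m u v"
    unfolding sform_W[where z=z]
    by (rule form_aux[OF a b, where X="Wc z u b * Wd z v a + Wd z u a * Wc z v b"])
       (use u v ab in \<open>auto simp: algebra_simps\<close>)
qed (blast intro: Em_Vsp, simp add: Em_def)

lemma Wc_Po[simp]: "v \<in> Vsp m \<Longrightarrow> Wc z (Po m z a b v) i =
   (if i = a then Wc z v a + Wd z v b else if i = b then Wc z v b + Wd z v a else Wc z v i)"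
  using ab by (simp add: Po_def)
lemma Wd_Po[simp]: "v \<in> Vsp m \<Longrightarrow> Wd z (Po m z a b v) i = Wd z v i"
  by (simp add: Po_def)
lemma Po_Vsp[simp]: "v \<in> Vsp m \<Longrightarrow> Po m z a b v \<in> Vsp m"
  using a b by (subst Vsp_iff[where z=z]) (auto simp: Vsp_iff[where z=z, of v])

lemma Po_Sp: "Po m z a b \<in> Sp m"
proof (rule Sp_intro)
  fix v assume v: "v \<in> Vsp m"
  show "Po m z a b (Po m z a b v) = v"
    by (rule vec_eqI[where z=z]) (use v ab in auto)
next
  fix u v assume u: "u \<in> Vsp m" and v: "v \<in> Vsp m"
  show "Po m z a b (vadd u v) = vadd (Po m z a b u) (Po m z a b v)"
    by (rule vec_eqI[where z=z]) (use u v vadd_Vsp in \<open>auto simp: algebra_simps\<close>)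
  show "sform m (Po m z a b u) (Po m z a b v) = sform m u v"
    unfolding sform_W[where z=z]
    by (rule form_aux[OF a b, where X="Wd z u b * Wd z v a + Wd z u a * Wd z v b"])
       (use u v ab in \<open>auto simp: algebra_simps\<close>)
qed (blast intro: Po_Vsp, simp add: Po_def)

end

context
  fixes m :: nat and z :: "nat \<Rightarrow> bool" and a :: nat
  assumes a: "a \<in> {1..m}"
begin

lemma Wc_Pd[simp]: "v \<in> Vsp m \<Longrightarrow> Wc z (Pd m z a v) i = (if i = a then Wc z v a + Wd z v a else Wc z v i)"
  by (simp add: Pd_def)
lemma Wd_Pd[simp]: "v \<in> Vsp m \<Longrightarrow> Wd z (Pd m z a v) i = Wd z v i"
  by (simp add: Pd_def)
lemma Pd_Vsp[simp]: "v \<in> Vsp m \<Longrightarrow> Pd m z a v \<in> Vsp m"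
  using a by (subst Vsp_iff[where z=z]) (auto simp: Vsp_iff[where z=z, of v])

lemma Pd_Sp: "Pd m z a \<in> Sp m"
proof (rule Sp_intro)
  fix v assume v: "v \<in> Vsp m"
  show "Pd m z a (Pd m z a v) = v"
    by (rule vec_eqI[where z=z]) (use v in auto)
next
  fix u v assume u: "u \<in> Vsp m" and v: "v \<in> Vsp m"
  show "Pd m z a (vadd u v) = vadd (Pd m z a u) (Pd m z a v)"
    by (rule vec_eqI[where z=z]) (use u v vadd_Vsp in \<open>auto simp: algebra_simps\<close>)
  show "sform m (Pd m z a u) (Pd m z a v) = sform m u v"
    unfolding sform_W[where z=z]
    by (rule form_aux[OF a a, where X="Wd z u a * Wd z v a"])
       (use u v in \<open>auto simp: algebra_simps\<close>)
qed (blast intro: Pd_Vsp, simp add: Pd_def)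

end


lemma UNIV_bit: "(UNIV :: bit set) = {0, 1}"
  by (auto intro: bit.exhaust)

lemma finite_Vsp: "finite (Vsp m)"
proof -
  let ?A = "{f :: nat \<Rightarrow> bit. \<forall>x. (x \<in> {1..m} \<longrightarrow> f x \<in> UNIV) \<and> (x \<notin> {1..m} \<longrightarrow> f x = 0)}"
  have fA: "finite ?A" by (rule finite_set_of_finite_funs) (auto simp: UNIV_bit)
  have "Vsp m \<subseteq> ?A \<times> ?A"
  proof
    fix v assume v: "v \<in> Vsp m"
    have "fst v x = 0 \<and> snd v x = 0" if "x \<notin> {1..m}" for x
      using that v unfolding Vsp_def by (cases "x = 0") auto
    then show "v \<in> ?A \<times> ?A" by (cases v) auto
  qed
  then show ?thesis using fA by (meson finite_SigmaI finite_subset)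
qed

lemma Sp_out: "h \<in> Sp m \<Longrightarrow> v \<notin> Vsp m \<Longrightarrow> h v = v"
  unfolding Sp_def mem_Collect_eq by blast

lemma finite_Sp: "finite (Sp m)"
proof (rule finite_imageD)
  show "inj_on (\<lambda>h. restrict h (Vsp m)) (Sp m)"
  proof (rule inj_onI)
    fix h1 h2 assume h: "h1 \<in> Sp m" "h2 \<in> Sp m" and e: "restrict h1 (Vsp m) = restrict h2 (Vsp m)"
    show "h1 = h2"
    proof
      fix v show "h1 v = h2 v"
      proof (cases "v \<in> Vsp m")
        case True
        from e have "restrict h1 (Vsp m) v = restrict h2 (Vsp m) v" by simp
        with True show ?thesis by simp
      next
        case False then show ?thesis using h Sp_out by metis
      qed
    qed
  qed
  have "(\<lambda>h. restrict h (Vsp m)) ` Sp m \<subseteq> Vsp m \<rightarrow>\<^sub>E Vsp m"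
    by (auto simp: Sp_def bij_betw_def)
  then show "finite ((\<lambda>h. restrict h (Vsp m)) ` Sp m)"
    by (rule finite_subset) (simp add: finite_PiE finite_Vsp)
qed

lemma Sp_Vsp: "h \<in> Sp m \<Longrightarrow> v \<in> Vsp m \<Longrightarrow> h v \<in> Vsp m"
  by (auto simp: Sp_def bij_betw_def)

lemma id_Sp: "(\<lambda>v. v) \<in> Sp m"
  by (simp add: Sp_def bij_betw_def)

lemma Sp_comp: "h1 \<in> Sp m \<Longrightarrow> h2 \<in> Sp m \<Longrightarrow> (\<lambda>v. h1 (h2 v)) \<in> Sp m"
proof -
  assume h1: "h1 \<in> Sp m" and h2: "h2 \<in> Sp m"
  have "bij_betw (h1 \<circ> h2) (Vsp m) (Vsp m)"
    using h1 h2 by (auto simp: Sp_def intro: bij_betw_trans)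
  then have b: "bij_betw (\<lambda>v. h1 (h2 v)) (Vsp m) (Vsp m)" by (simp add: comp_def)
  show ?thesis unfolding Sp_def mem_Collect_eq
  proof (intro conjI ballI allI impI b)
    fix u v assume u: "u \<in> Vsp m" and v: "v \<in> Vsp m"
    show "h1 (h2 (vadd u v)) = vadd (h1 (h2 u)) (h1 (h2 v))"
      using h1 h2 u v Sp_Vsp[OF h2] by (simp add: Sp_def)
    show "sform m (h1 (h2 u)) (h1 (h2 v)) = sform m u v"
      using h1 h2 u v Sp_Vsp[OF h2] by (simp add: Sp_def)
  next
    fix v assume "v \<notin> Vsp m"
    then show "h1 (h2 v) = v" using h1 h2 Sp_out by metis
  qed
qed

definition hinv :: "nat \<Rightarrow> (vec \<Rightarrow> vec) \<Rightarrow> vec \<Rightarrow> vec" where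
  "hinv m h = (\<lambda>v. if v \<in> Vsp m then inv_into (Vsp m) h v else v)"

context
  fixes m h assumes h: "h \<in> Sp m"
begin

lemma h_bij: "bij_betw h (Vsp m) (Vsp m)" using h by (simp add: Sp_def)
lemma h_img: "h ` Vsp m = Vsp m" using h_bij by (simp add: bij_betw_def)
lemma h_inj: "inj_on h (Vsp m)" using h_bij by (simp add: bij_betw_def)

lemma hinv_Vsp: "v \<in> Vsp m \<Longrightarrow> hinv m h v \<in> Vsp m"
  using h_img by (simp add: hinv_def) (metis inv_into_into)
lemma h_hinv: "v \<in> Vsp m \<Longrightarrow> h (hinv m h v) = v"
  using h_img by (simp add: hinv_def) (metis f_inv_into_f)
lemma hinv_h: "v \<in> Vsp m \<Longrightarrow> hinv m h (h v) = v"
  using h_inj Sp_Vsp[OF h] by (simp add: hinv_def)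

lemma hinv_Sp: "hinv m h \<in> Sp m"
proof -
  have b: "bij_betw (hinv m h) (Vsp m) (Vsp m)"
    by (rule bij_betw_byWitness[where f'=h]) (auto simp: hinv_h h_hinv hinv_Vsp Sp_Vsp[OF h])
  show ?thesis unfolding Sp_def mem_Collect_eq
  proof (intro conjI ballI allI impI b)
    fix u v assume u: "u \<in> Vsp m" and v: "v \<in> Vsp m"
    have "h (vadd (hinv m h u) (hinv m h v)) = vadd u v"
      using h u v hinv_Vsp by (simp add: Sp_def h_hinv)
    then have "hinv m h (vadd u v) = hinv m h (h (vadd (hinv m h u) (hinv m h v)))" by simp
    also have "\<dots> = vadd (hinv m h u) (hinv m h v)"
      by (rule hinv_h) (simp add: vadd_Vsp hinv_Vsp u v)
    finally show "hinv m h (vadd u v) = vadd (hinv m h u) (hinv m h v)" .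
    have "sform m (hinv m h u) (hinv m h v) = sform m (h (hinv m h u)) (h (hinv m h v))"
      using h u v hinv_Vsp by (simp add: Sp_def)
    then show "sform m (hinv m h u) (hinv m h v) = sform m u v" by (simp add: h_hinv u v)
  next
    fix v assume "v \<notin> Vsp m" then show "hinv m h v = v" by (simp add: hinv_def)
  qed
qed

lemma inv_hinv: "v \<in> Vsp m \<Longrightarrow> inv_into (Vsp m) (hinv m h) v = h v"
proof (rule inv_into_f_eq)
  show "inj_on (hinv m h) (Vsp m)" using hinv_Sp by (simp add: Sp_def bij_betw_def)
qed (auto simp: Sp_Vsp[OF h] hinv_h)

end

lemma list_act:
  assumes "set hs \<subseteq> Sp m"
  shows "\<exists>g. \<forall>v\<in>Vsp m. gr_act m g f v = (\<Sum>h\<leftarrow>hs. f (h v))"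
  using assms
proof (induction hs)
  case Nil
  show ?case by (rule exI[where x="\<lambda>_. 0"]) (simp add: gr_act_def)
next
  case (Cons h hs)
  then obtain g where g: "\<forall>v\<in>Vsp m. gr_act m g f v = (\<Sum>h\<leftarrow>hs. f (h v))" by auto
  have h: "h \<in> Sp m" using Cons by simp
  define k0 where "k0 = hinv m h"
  have k0: "k0 \<in> Sp m" using hinv_Sp[OF h] by (simp add: k0_def)
  define g' where "g' = (\<lambda>k. g k + (if k = k0 then 1 else 0))"
  show ?case
  proof (rule exI[where x=g'], intro ballI)
    fix v assume v: "v \<in> Vsp m"
    have "gr_act m g' f v = gr_act m g f v
            + (\<Sum>k\<in>Sp m. (if k = k0 then 1 else 0) * f (inv_into (Vsp m) k v))"
      unfolding gr_act_def g'_def by (simp only: distrib_right sum.distrib)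
    also have "(\<Sum>k\<in>Sp m. (if k = k0 then 1 else 0) * f (inv_into (Vsp m) k v))
             = (\<Sum>k\<in>Sp m. if k = k0 then f (inv_into (Vsp m) k v) else 0)"
      by (rule sum.cong) auto
    also have "\<dots> = f (inv_into (Vsp m) k0 v)"
      using k0 finite_Sp by simp
    also have "\<dots> = f (h v)" using inv_hinv[OF h v] by (simp add: k0_def)
    finally show "gr_act m g' f v = (\<Sum>h\<leftarrow>h # hs. f (h v))"
      using g v by (simp add: add.commute)
  qed
qed


definition monoST :: "nat set \<Rightarrow> nat set \<Rightarrow> (nat \<Rightarrow> bool) \<Rightarrow> mono" where
  "monoST S T z = (\<Union>i\<in>S. Wv i) \<union> {(z i, i) | i. i \<in> T}"

lemma classpoly0_iff:
  "classpoly m 0 \<sigma> \<tau> \<upsilon> F \<longleftrightarrow> (\<exists>S T U z. S \<inter> T = {} \<and> S \<inter> U = {} \<and> T \<inter> U = {} \<and>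
      S \<union> T \<union> U = {1..m} \<and> card S = \<sigma> \<and> card T = \<tau> \<and> card U = \<upsilon> \<and> F = {monoST S T z})"
  unfolding classpoly_def monoST_def by auto

lemma prod_Wv: "(\<Prod>w\<in>Wv i. coord w v) = fst v i * snd v i"
  by (simp add: Wv_def coord_def)

lemma phi_mono:
  assumes fS: "finite S" and fT: "finite T" and d: "S \<inter> T = {}"
  shows "phi {monoST S T z} v = (\<Prod>i\<in>S. Wc z v i * Wd z v i) * (\<Prod>i\<in>T. Wc z v i)"
proof -
  have img: "{(z i, i) | i. i \<in> T} = (\<lambda>i. (z i, i)) ` T" by auto
  have fU: "finite (\<Union>i\<in>S. Wv i)" using fS by (simp add: Wv_def)
  have disj: "(\<Union>i\<in>S. Wv i) \<inter> (\<lambda>i. (z i, i)) ` T = {}" using d by (auto simp: Wv_def)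
  have "phi {monoST S T z} v = (\<Prod>w\<in>(\<Union>i\<in>S. Wv i) \<union> (\<lambda>i. (z i, i)) ` T. coord w v)"
    by (simp add: phi_def monoST_def img)
  also have "\<dots> = (\<Prod>w\<in>(\<Union>i\<in>S. Wv i). coord w v) * (\<Prod>w\<in>(\<lambda>i. (z i, i)) ` T. coord w v)"
    by (rule prod.union_disjoint[OF fU _ disj]) (simp add: fT)
  also have "(\<Prod>w\<in>(\<Union>i\<in>S. Wv i). coord w v) = (\<Prod>i\<in>S. \<Prod>w\<in>Wv i. coord w v)"
    by (rule prod.UNION_disjoint[OF fS]) (auto simp: Wv_def)
  also have "\<dots> = (\<Prod>i\<in>S. Wc z v i * Wd z v i)"
    by (simp add: prod_Wv pr_eq[where z=z])
  also have "(\<Prod>w\<in>(\<lambda>i. (z i, i)) ` T. coord w v) = (\<Prod>i\<in>T. Wc z v i)"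
    by (subst prod.reindex) (auto simp: inj_on_def coord_W)
  finally show ?thesis .
qed

lemma foc_elim:
  assumes "fun_of_class m 0 \<sigma> \<tau> \<upsilon> f"
  shows "\<exists>S T U z. S \<inter> T = {} \<and> S \<inter> U = {} \<and> T \<inter> U = {} \<and>
      S \<union> T \<union> U = {1..m} \<and> card S = \<sigma> \<and> card T = \<tau> \<and> card U = \<upsilon> \<and>
      (\<forall>v\<in>Vsp m. f v = (\<Prod>i\<in>S. Wc z v i * Wd z v i) * (\<Prod>i\<in>T. Wc z v i))"
proof -
  obtain F where F: "classpoly m 0 \<sigma> \<tau> \<upsilon> F" "\<forall>v\<in>Vsp m. f v = phi F v"
    using assms by (auto simp: fun_of_class_def)
  then obtain S T U z where p: "S \<inter> T = {}" "S \<inter> U = {}" "T \<inter> U = {}"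
      "S \<union> T \<union> U = {1..m}" "card S = \<sigma>" "card T = \<tau>" "card U = \<upsilon>" "F = {monoST S T z}"
    unfolding classpoly0_iff by blast
  have fin: "finite S" "finite T" using p(4) by (metis finite_Un finite_atLeastAtMost)+
  show ?thesis
    by (rule exI[of _ S], rule exI[of _ T], rule exI[of _ U], rule exI[of _ z])
       (use p F fin phi_mono in auto)
qed

lemma foc_intro:
  assumes "S \<inter> T = {}" "S \<inter> U = {}" "T \<inter> U = {}" "S \<union> T \<union> U = {1..m}"
    and "\<forall>v\<in>Vsp m. f v = (\<Prod>i\<in>S. Wc z v i * Wd z v i) * (\<Prod>i\<in>T. Wc z v i)"
  shows "fun_of_class m 0 (card S) (card T) (card U) f"
proof -
  have fin: "finite S" "finite T" using assms(4) by (metis finite_Un finite_atLeastAtMost)+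
  have "classpoly m 0 (card S) (card T) (card U) {monoST S T z}"
    unfolding classpoly0_iff using assms(1-4) by blast
  moreover have "\<forall>v\<in>Vsp m. f v = phi {monoST S T z} v"
    using assms(5) phi_mono[OF fin assms(1)] by simp
  ultimately show ?thesis unfolding fun_of_class_def by blast
qed


lemma engine:
  assumes hs: "set hs \<subseteq> Sp m"
    and fin: "finite S" "finite T"
    and frame: "\<And>v h i. v \<in> Vsp m \<Longrightarrow> h \<in> set hs \<Longrightarrow> i \<notin> K \<Longrightarrow>
                   Wc z (h v) i = Wc z v i \<and> Wd z (h v) i = Wd z v i"
    and core: "\<And>v. v \<in> Vsp m \<Longrightarrow> (\<Sum>h\<leftarrow>hs. (\<Prod>i\<in>S \<inter> K. Wc z (h v) i * Wd z (h v) i)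
                  * (\<Prod>i\<in>T \<inter> K. Wc z (h v) i)) = N v"
    and fv: "\<forall>v\<in>Vsp m. f v = (\<Prod>i\<in>S. Wc z v i * Wd z v i) * (\<Prod>i\<in>T. Wc z v i)"
  shows "\<exists>g. \<forall>v\<in>Vsp m. gr_act m g f v =
            N v * ((\<Prod>i\<in>S - K. Wc z v i * Wd z v i) * (\<Prod>i\<in>T - K. Wc z v i))"
proof -
  obtain g where g: "\<forall>v\<in>Vsp m. gr_act m g f v = (\<Sum>h\<leftarrow>hs. f (h v))"
    using list_act[OF hs] by blast
  show ?thesis
  proof (rule exI[of _ g], intro ballI)
    fix v assume v: "v \<in> Vsp m"
    let ?R = "(\<Prod>i\<in>S - K. Wc z v i * Wd z v i) * (\<Prod>i\<in>T - K. Wc z v i)"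
    have each: "f (h v) = ((\<Prod>i\<in>S \<inter> K. Wc z (h v) i * Wd z (h v) i)
                  * (\<Prod>i\<in>T \<inter> K. Wc z (h v) i)) * ?R" if h: "h \<in> set hs" for h
    proof -
      have hv: "h v \<in> Vsp m" using hs h v Sp_Vsp by blast
      have e1: "(\<Prod>i\<in>S - K. Wc z (h v) i * Wd z (h v) i) = (\<Prod>i\<in>S - K. Wc z v i * Wd z v i)"
        by (rule prod.cong[OF refl]) (use frame[OF v h] in simp)
      have e2: "(\<Prod>i\<in>T - K. Wc z (h v) i) = (\<Prod>i\<in>T - K. Wc z v i)"
        by (rule prod.cong[OF refl]) (use frame[OF v h] in simp)
      have "f (h v) = (\<Prod>i\<in>S. Wc z (h v) i * Wd z (h v) i) * (\<Prod>i\<in>T. Wc z (h v) i)"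
        using fv hv by blast
      also have "\<dots> = ((\<Prod>i\<in>S \<inter> K. Wc z (h v) i * Wd z (h v) i) * (\<Prod>i\<in>S - K. Wc z (h v) i * Wd z (h v) i))
                   * ((\<Prod>i\<in>T \<inter> K. Wc z (h v) i) * (\<Prod>i\<in>T - K. Wc z (h v) i))"
        by (simp only: prod.Int_Diff[OF fin(1), of _ K, symmetric] prod.Int_Diff[OF fin(2), of _ K, symmetric])
      also have "\<dots> = ((\<Prod>i\<in>S \<inter> K. Wc z (h v) i * Wd z (h v) i)
                  * (\<Prod>i\<in>T \<inter> K. Wc z (h v) i)) * ?R"
        by (simp only: e1 e2 mult_ac)
      finally show ?thesis .
    qed
    have "gr_act m g f v = (\<Sum>h\<leftarrow>hs. f (h v))" using g v by blast
    also have "\<dots> = (\<Sum>h\<leftarrow>hs. ((\<Prod>i\<in>S \<inter> K. Wc z (h v) i * Wd z (h v) i)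
                  * (\<Prod>i\<in>T \<inter> K. Wc z (h v) i)) * ?R)"
      by (rule arg_cong[of _ _ sum_list], rule map_cong[OF refl]) (rule each)
    also have "\<dots> = N v * ?R"
      by (simp only: sum_list_mult_const core[OF v])
    finally show "gr_act m g f v = N v * ?R" .
  qed
qed


lemma Wc_upd_other: "i \<noteq> a \<Longrightarrow> Wc (z(a := c)) v i = Wc z v i" by (simp add: Wc_def)
lemma Wd_upd_other: "i \<noteq> a \<Longrightarrow> Wd (z(a := c)) v i = Wd z v i" by (simp add: Wd_def)
lemma Wc_flip: "Wc (z(a := \<not> z a)) v a = Wd z v a" by (simp add: Wc_def Wd_def)

lemma part_fin1: "(S::nat set) \<union> T \<union> U = {1..m} \<Longrightarrow> finite S"
  by (metis finite_Un finite_atLeastAtMost)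
lemma part_fin2: "(S::nat set) \<union> T \<union> U = {1..m} \<Longrightarrow> finite T"
  by (metis finite_Un finite_atLeastAtMost)
lemma part_fin3: "(S::nat set) \<union> T \<union> U = {1..m} \<Longrightarrow> finite U"
  by (metis finite_Un finite_atLeastAtMost)
lemmas part_fin = part_fin1 part_fin2 part_fin3

lemma caseC:
  assumes part: "S \<inter> T = {}" "S \<inter> U = {}" "T \<inter> U = {}" "S \<union> T \<union> U = {1..m}"
    and a: "a \<in> S"
    and fv: "\<forall>v\<in>Vsp m. f v = (\<Prod>i\<in>S. Wc z v i * Wd z v i) * (\<Prod>i\<in>T. Wc z v i)"
  shows "\<exists>g. fun_of_class m 0 (card S - 1) (card T + 1) (card U) (gr_act m g f)"
proof -
  note fin = part_fin[OF part(4)]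
  have am: "a \<in> {1..m}" using a part(4) by blast
  have aT: "a \<notin> T" using a part(1) by blast
  have SK: "S \<inter> {a} = {a}" using a by blast
  have TK: "T \<inter> {a} = {}" using aT by blast
  have hs: "set [\<lambda>v. v, Pd m z a] \<subseteq> Sp m" using id_Sp Pd_Sp[OF am] by auto
  obtain g where g: "\<forall>v\<in>Vsp m. gr_act m g f v =
      Wd z v a * ((\<Prod>i\<in>S - {a}. Wc z v i * Wd z v i) * (\<Prod>i\<in>T - {a}. Wc z v i))"
  proof (rule exE[OF engine[OF hs fin(1,2) _ _ fv, where K="{a}" and N="\<lambda>v. Wd z v a"]])
    fix v h i assume "v \<in> Vsp m" "h \<in> set [\<lambda>v. v, Pd m z a]" "i \<notin> {a}"
    then show "Wc z (h v) i = Wc z v i \<and> Wd z (h v) i = Wd z v i" using am by auto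
  next
    fix v assume v: "v \<in> Vsp m"
    show "(\<Sum>h\<leftarrow>[\<lambda>v. v, Pd m z a]. (\<Prod>i\<in>S \<inter> {a}. Wc z (h v) i * Wd z (h v) i)
                  * (\<Prod>i\<in>T \<inter> {a}. Wc z (h v) i)) = Wd z v a"
      unfolding SK TK using v am by (cases "Wc z v a"; cases "Wd z v a"; simp)
  qed blast
  let ?z = "z(a := \<not> z a)"
  have "fun_of_class m 0 (card (S - {a})) (card (insert a T)) (card U) (gr_act m g f)"
  proof (rule foc_intro[where z="?z"])
    show "(S - {a}) \<inter> insert a T = {}" "(S - {a}) \<inter> U = {}" "insert a T \<inter> U = {}"
      "S - {a} \<union> insert a T \<union> U = {1..m}" using part a by auto
    show "\<forall>v\<in>Vsp m. gr_act m g f v = (\<Prod>i\<in>S - {a}. Wc ?z v i * Wd ?z v i) * (\<Prod>i\<in>insert a T. Wc ?z v i)"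
    proof
      fix v assume v: "v \<in> Vsp m"
      have e1: "(\<Prod>i\<in>S - {a}. Wc ?z v i * Wd ?z v i) = (\<Prod>i\<in>S - {a}. Wc z v i * Wd z v i)"
        by (rule prod.cong[OF refl]) (simp add: Wc_upd_other Wd_upd_other)
      have "(\<Prod>i\<in>insert a T. Wc ?z v i) = Wc ?z v a * (\<Prod>i\<in>T. Wc ?z v i)"
        using fin(2) aT by simp
      also have "(\<Prod>i\<in>T. Wc ?z v i) = (\<Prod>i\<in>T. Wc z v i)"
        by (rule prod.cong[OF refl]) (metis aT Wc_upd_other)
      finally have e2: "(\<Prod>i\<in>insert a T. Wc ?z v i) = Wd z v a * (\<Prod>i\<in>T. Wc z v i)"
        by (simp only: Wc_flip)
      show "gr_act m g f v = (\<Prod>i\<in>S - {a}. Wc ?z v i * Wd ?z v i) * (\<Prod>i\<in>insert a T. Wc ?z v i)"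
        using g v aT by (simp add: e1 e2 mult_ac)
    qed
  qed
  moreover have "card (S - {a}) = card S - 1" using a fin by simp
  moreover have "card (insert a T) = card T + 1" using aT fin by simp
  ultimately show ?thesis by metis
qed


lemma caseB2:
  assumes part: "S \<inter> T = {}" "S \<inter> U = {}" "T \<inter> U = {}" "S \<union> T \<union> U = {1..m}"
    and a: "a \<in> T" and b: "b \<in> T" and ab: "a \<noteq> b"
    and fv: "\<forall>v\<in>Vsp m. f v = (\<Prod>i\<in>S. Wc z v i * Wd z v i) * (\<Prod>i\<in>T. Wc z v i)"
  shows "\<exists>g. fun_of_class m 0 (card S) (card T - 1) (card U + 1) (gr_act m g f)"
proof -
  note fin = part_fin[OF part(4)]
  have am: "a \<in> {1..m}" and bm: "b \<in> {1..m}" using a b part(4) by blast+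
  have ba: "b \<noteq> a" using ab by blast
  have aU: "a \<notin> U" using a part(3) by blast
  have SK: "S \<inter> {a, b} = {}" using a b part(1) by blast
  have TK: "T \<inter> {a, b} = {a, b}" using a b by blast
  have hs: "set [\<lambda>v. v, Em m z a b] \<subseteq> Sp m" using id_Sp Em_Sp[OF am bm ab] by auto
  obtain g where g: "\<forall>v\<in>Vsp m. gr_act m g f v =
      Wc z v b * ((\<Prod>i\<in>S - {a, b}. Wc z v i * Wd z v i) * (\<Prod>i\<in>T - {a, b}. Wc z v i))"
  proof (rule exE[OF engine[OF hs fin(1,2) _ _ fv, where K="{a, b}" and N="\<lambda>v. Wc z v b"]])
    fix v h i assume "v \<in> Vsp m" "h \<in> set [\<lambda>v. v, Em m z a b]" "i \<notin> {a, b}"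
    then show "Wc z (h v) i = Wc z v i \<and> Wd z (h v) i = Wd z v i" using am bm ab by auto
  next
    fix v assume v: "v \<in> Vsp m"
    show "(\<Sum>h\<leftarrow>[\<lambda>v. v, Em m z a b]. (\<Prod>i\<in>S \<inter> {a, b}. Wc z (h v) i * Wd z (h v) i)
                  * (\<Prod>i\<in>T \<inter> {a, b}. Wc z (h v) i)) = Wc z v b"
      unfolding SK TK using v am bm ab ba by (cases "Wc z v a"; cases "Wc z v b"; simp)
  qed blast
  have "fun_of_class m 0 (card S) (card (T - {a})) (card (insert a U)) (gr_act m g f)"
  proof (rule foc_intro[where z=z])
    show "S \<inter> (T - {a}) = {}" "S \<inter> insert a U = {}" "(T - {a}) \<inter> insert a U = {}"
      "S \<union> (T - {a}) \<union> insert a U = {1..m}" using part a by auto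
    show "\<forall>v\<in>Vsp m. gr_act m g f v = (\<Prod>i\<in>S. Wc z v i * Wd z v i) * (\<Prod>i\<in>T - {a}. Wc z v i)"
    proof
      fix v assume v: "v \<in> Vsp m"
      have e0: "S - {a, b} = S" using SK by blast
      have e1: "T - {a} = insert b (T - {a, b})" using b ab by blast
      have e2: "(\<Prod>i\<in>T - {a}. Wc z v i) = Wc z v b * (\<Prod>i\<in>T - {a, b}. Wc z v i)"
        unfolding e1 using fin(2) by simp
      show "gr_act m g f v = (\<Prod>i\<in>S. Wc z v i * Wd z v i) * (\<Prod>i\<in>T - {a}. Wc z v i)"
        using g v by (simp add: e0 e2 mult_ac)
    qed
  qed
  moreover have "card (T - {a}) = card T - 1" using a fin by simp
  moreover have "card (insert a U) = card U + 1" using aU fin by simp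
  ultimately show ?thesis by metis
qed

lemma caseB1:
  assumes part: "S \<inter> T = {}" "S \<inter> U = {}" "T \<inter> U = {}" "S \<union> T \<union> U = {1..m}"
    and i: "i \<in> S" and a: "a \<in> T"
    and fv: "\<forall>v\<in>Vsp m. f v = (\<Prod>i\<in>S. Wc z v i * Wd z v i) * (\<Prod>i\<in>T. Wc z v i)"
  shows "\<exists>g. fun_of_class m 0 (card S) (card T - 1) (card U + 1) (gr_act m g f)"
proof -
  note fin = part_fin[OF part(4)]
  have am: "a \<in> {1..m}" and im: "i \<in> {1..m}" using a i part(4) by blast+
  have ai: "a \<noteq> i" and ia: "i \<noteq> a" using a i part(1) by blast+
  have aU: "a \<notin> U" using a part(3) by blast
  have SK: "S \<inter> {i, a} = {i}" using a i part(1) by blast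
  have TK: "T \<inter> {i, a} = {a}" using a i part(1) by blast
  let ?hs = "[\<lambda>v. v, Em m z a i, \<lambda>v. Em m z a i (Em m z i a v)]"
  have hs: "set ?hs \<subseteq> Sp m"
    using id_Sp Em_Sp[OF am im ai] Em_Sp[OF im am ia] Sp_comp by auto
  obtain g where g: "\<forall>v\<in>Vsp m. gr_act m g f v =
      (Wc z v i * Wd z v i) * ((\<Prod>j\<in>S - {i, a}. Wc z v j * Wd z v j) * (\<Prod>j\<in>T - {i, a}. Wc z v j))"
  proof (rule exE[OF engine[OF hs fin(1,2) _ _ fv, where K="{i, a}" and N="\<lambda>v. Wc z v i * Wd z v i"]])
    fix v h j assume "v \<in> Vsp m" "h \<in> set ?hs" "j \<notin> {i, a}"
    then show "Wc z (h v) j = Wc z v j \<and> Wd z (h v) j = Wd z v j" using am im ai by auto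
  next
    fix v assume v: "v \<in> Vsp m"
    show "(\<Sum>h\<leftarrow>?hs. (\<Prod>j\<in>S \<inter> {i, a}. Wc z (h v) j * Wd z (h v) j)
                  * (\<Prod>j\<in>T \<inter> {i, a}. Wc z (h v) j)) = Wc z v i * Wd z v i"
      unfolding SK TK using v am im ai ia
      apply simp
      apply (cases "Wc z v a"; cases "Wc z v i"; cases "Wd z v a"; cases "Wd z v i"; simp)
      done
  qed blast
  have "fun_of_class m 0 (card S) (card (T - {a})) (card (insert a U)) (gr_act m g f)"
  proof (rule foc_intro[where z=z])
    show "S \<inter> (T - {a}) = {}" "S \<inter> insert a U = {}" "(T - {a}) \<inter> insert a U = {}"
      "S \<union> (T - {a}) \<union> insert a U = {1..m}" using part a by auto
    show "\<forall>v\<in>Vsp m. gr_act m g f v = (\<Prod>i\<in>S. Wc z v i * Wd z v i) * (\<Prod>i\<in>T - {a}. Wc z v i)"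
    proof
      fix v assume v: "v \<in> Vsp m"
      have e0: "S - {i, a} = S - {i}" using ai a part(1) by blast
      have e1: "T - {i, a} = T - {a}" using i part(1) by blast
      have e2: "(\<Prod>j\<in>S. Wc z v j * Wd z v j) = (Wc z v i * Wd z v i) * (\<Prod>j\<in>S - {i}. Wc z v j * Wd z v j)"
        using fin(1) i by (simp add: prod.remove)
      show "gr_act m g f v = (\<Prod>i\<in>S. Wc z v i * Wd z v i) * (\<Prod>i\<in>T - {a}. Wc z v i)"
        using g v by (simp add: e0 e1 e2 mult_ac)
    qed
  qed
  moreover have "card (T - {a}) = card T - 1" using a fin by simp
  moreover have "card (insert a U) = card U + 1" using aU fin by simp
  ultimately show ?thesis by metis
qed



definition cmp :: "(vec \<Rightarrow> vec) \<Rightarrow> (vec \<Rightarrow> vec) \<Rightarrow> vec \<Rightarrow> vec" where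
  "cmp h1 h2 = (\<lambda>v. h1 (h2 v))"
lemma cmp_apply[simp]: "cmp h1 h2 v = h1 (h2 v)" by (simp add: cmp_def)
lemma cmp_Sp: "h1 \<in> Sp m \<Longrightarrow> h2 \<in> Sp m \<Longrightarrow> cmp h1 h2 \<in> Sp m"
  unfolding cmp_def by (rule Sp_comp)

lemma caseA:
  assumes part: "S \<inter> T = {}" "S \<inter> U = {}" "T \<inter> U = {}" "S \<union> T \<union> U = {1..m}"
    and a: "a \<in> T" and b: "b \<in> T" and c: "c \<in> T" and ab: "a \<noteq> b" and ac: "a \<noteq> c" and bc: "b \<noteq> c"
    and fv: "\<forall>v\<in>Vsp m. f v = (\<Prod>i\<in>S. Wc z v i * Wd z v i) * (\<Prod>i\<in>T. Wc z v i)"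
  shows "\<exists>g. fun_of_class m 0 (card S + 1) (card T - 3) (card U + 2) (gr_act m g f)"
proof -
  note fin = part_fin[OF part(4)]
  have am: "a \<in> {1..m}" and bm: "b \<in> {1..m}" and cm: "c \<in> {1..m}" using a b c part(4) by blast+
  have ba: "b \<noteq> a" and ca: "c \<noteq> a" and cb: "c \<noteq> b" using ab ac bc by blast+
  have cS: "c \<notin> S" using c part(1) by blast
  have SK: "S \<inter> {a, b, c} = {}" using a b c part(1) by blast
  have TK: "T \<inter> {a, b, c} = {a, b, c}" using a b c by blast
  let ?hs = "[cmp (Po m z a b) (Em m z b a),
              cmp (Pd m z a) (Em m z c a),
              cmp (Pd m z a) (cmp (Po m z b c) (Em m z a c)),
              cmp (Pd m z a) (cmp (Po m z a c) (cmp (Em m z c b) (Pd m z b))),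
              cmp (Pd m z b) (cmp (Pd m z c) (Em m z b c)),
              cmp (Pd m z a) (cmp (Po m z b c) (cmp (Em m z b a) (Pd m z a))),
              cmp (Pd m z b) (cmp (Pd m z c) (Em m z a c)),
              cmp (Po m z a c) (cmp (Pd m z c) (Em m z b c))]"
  have hs: "set ?hs \<subseteq> Sp m"
    using am bm cm ab ac bc ba ca cb
    by (simp only: set_simps insert_subset empty_subsetI, intro conjI cmp_Sp Em_Sp Pd_Sp Po_Sp; simp)
  obtain g where g: "\<forall>v\<in>Vsp m. gr_act m g f v =
      (Wc z v c * Wd z v c) * ((\<Prod>j\<in>S - {a, b, c}. Wc z v j * Wd z v j) * (\<Prod>j\<in>T - {a, b, c}. Wc z v j))"
  proof (rule exE[OF engine[OF hs fin(1,2) _ _ fv, where K="{a, b, c}" and N="\<lambda>v. Wc z v c * Wd z v c"]])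
    fix v h j assume "v \<in> Vsp m" "h \<in> set ?hs" "j \<notin> {a, b, c}"
    then show "Wc z (h v) j = Wc z v j \<and> Wd z (h v) j = Wd z v j"
      using am bm cm ab ac bc ba ca cb by auto
  next
    fix v assume v: "v \<in> Vsp m"
    show "(\<Sum>h\<leftarrow>?hs. (\<Prod>j\<in>S \<inter> {a, b, c}. Wc z (h v) j * Wd z (h v) j)
                  * (\<Prod>j\<in>T \<inter> {a, b, c}. Wc z (h v) j)) = Wc z v c * Wd z v c"
      unfolding SK TK using v am bm cm ab ac bc ba ca cb
      apply simp
      apply (cases "Wc z v a"; cases "Wc z v b"; cases "Wc z v c";
             cases "Wd z v a"; cases "Wd z v b"; cases "Wd z v c"; simp)
      done
  qed blast
  have "fun_of_class m 0 (card (insert c S)) (card (T - {a, b, c})) (card (U \<union> {a, b})) (gr_act m g f)"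
  proof (rule foc_intro[where z=z])
    show "insert c S \<inter> (T - {a, b, c}) = {}" "insert c S \<inter> (U \<union> {a, b}) = {}"
      "(T - {a, b, c}) \<inter> (U \<union> {a, b}) = {}"
      "insert c S \<union> (T - {a, b, c}) \<union> (U \<union> {a, b}) = {1..m}"
      using part a b c ab ac bc by auto
    show "\<forall>v\<in>Vsp m. gr_act m g f v = (\<Prod>i\<in>insert c S. Wc z v i * Wd z v i) * (\<Prod>i\<in>T - {a, b, c}. Wc z v i)"
    proof
      fix v assume v: "v \<in> Vsp m"
      have e0: "S - {a, b, c} = S" using SK by blast
      have e2: "(\<Prod>j\<in>insert c S. Wc z v j * Wd z v j) = (Wc z v c * Wd z v c) * (\<Prod>j\<in>S. Wc z v j * Wd z v j)"
        using fin(1) cS by simp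
      show "gr_act m g f v = (\<Prod>i\<in>insert c S. Wc z v i * Wd z v i) * (\<Prod>i\<in>T - {a, b, c}. Wc z v i)"
        using g v by (simp add: e0 e2 mult_ac)
    qed
  qed
  moreover have "card (insert c S) = card S + 1" using cS fin by simp
  moreover have "card (T - {a, b, c}) = card T - 3"
    using a b c ab ac bc fin by (subst card_Diff_subset) auto
  moreover have "card (U \<union> {a, b}) = card U + 2"
    using a b ab part(3) fin by (subst card_Un_disjoint) auto
  ultimately show ?thesis by metis
qed


lemma get1: "1 \<le> card (T::nat set) \<Longrightarrow> \<exists>a. a \<in> T"
  by (metis card.empty ex_in_conv not_one_le_zero)

lemma get2: "2 \<le> card (T::nat set) \<Longrightarrow> \<exists>a b. a \<in> T \<and> b \<in> T \<and> a \<noteq> b"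
proof -
  assume "2 \<le> card T"
  then obtain B where "B \<subseteq> T" "card B = 2" by (rule obtain_subset_with_card_n)
  then show ?thesis by (auto simp: card_2_iff)
qed

lemma get3: "3 \<le> card (T::nat set) \<Longrightarrow> \<exists>a b c. a \<in> T \<and> b \<in> T \<and> c \<in> T \<and> a \<noteq> b \<and> a \<noteq> c \<and> b \<noteq> c"
proof -
  assume "3 \<le> card T"
  then obtain B where "B \<subseteq> T" "card B = 3" by (rule obtain_subset_with_card_n)
  then show ?thesis by (auto simp: card_3_iff)
qed

theorem lemma6p4:
  fixes m r s \<sigma> \<tau> \<upsilon> :: nat and f :: "vec \<Rightarrow> bit"
  assumes "1 \<le> r" and "r \<le> 2*m - 1"
    and "1 < s" and "s \<le> 2*m - r"
    and "\<sigma> = min (2*m - r - s + (if m > r then 1 else 0) * (m - r)) (s div 2)"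
    and "\<tau> = s - 2*\<sigma>" and "\<upsilon> = m - \<sigma> - \<tau>"
    and "sympl_basis_fun m s f"
    and "fun_of_class m 0 \<sigma> \<tau> \<upsilon> f"
  shows "(real \<sigma> < real s / 2 - 1 \<longrightarrow>
            (\<exists>g. fun_of_class m 0 (\<sigma> + 1) (\<tau> - 3) (\<upsilon> + 2) (gr_act m g f)))
       \<and> ((real \<sigma> = real s / 2 - 1 \<or> real \<sigma> = (real s - 1) / 2) \<longrightarrow>
            (\<exists>g. fun_of_class m 0 \<sigma> (\<tau> - 1) (\<upsilon> + 1) (gr_act m g f)))
       \<and> (real \<sigma> = real s / 2 \<longrightarrow>
            (\<exists>g. fun_of_class m 0 (\<sigma> - 1) (\<tau> + 1) \<upsilon> (gr_act m g f)))"
proof -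
  obtain S T U z where part: "S \<inter> T = {}" "S \<inter> U = {}" "T \<inter> U = {}" "S \<union> T \<union> U = {1..m}"
    and cS: "card S = \<sigma>" and cT: "card T = \<tau>" and cU: "card U = \<upsilon>"
    and fv: "\<forall>v\<in>Vsp m. f v = (\<Prod>i\<in>S. Wc z v i * Wd z v i) * (\<Prod>i\<in>T. Wc z v i)"
    using foc_elim[OF assms(9)] by blast
  have tau: "\<tau> = s - 2 * \<sigma>" by (rule assms(6))
  have s1: "1 < s" by (rule assms(3))
  show ?thesis
  proof (intro conjI impI)
    assume h: "real \<sigma> < real s / 2 - 1"
    then have "real (2 * \<sigma> + 2) < real s" by simp
    then have "2 * \<sigma> + 2 < s" by (simp only: of_nat_less_iff)
    then have "3 \<le> card T" using cT tau by simp
    then obtain a b c where abc: "a \<in> T" "b \<in> T" "c \<in> T" "a \<noteq> b" "a \<noteq> c" "b \<noteq> c"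
      using get3 by blast
    show "\<exists>g. fun_of_class m 0 (\<sigma> + 1) (\<tau> - 3) (\<upsilon> + 2) (gr_act m g f)"
      using caseA[OF part abc fv] cS cT cU by simp
  next
    assume h: "real \<sigma> = real s / 2 - 1 \<or> real \<sigma> = (real s - 1) / 2"
    then show "\<exists>g. fun_of_class m 0 \<sigma> (\<tau> - 1) (\<upsilon> + 1) (gr_act m g f)"
    proof
      assume "real \<sigma> = real s / 2 - 1"
      then have "real (2 * \<sigma> + 2) = real s" by simp
      then have "2 * \<sigma> + 2 = s" by (simp only: of_nat_eq_iff)
      then have "2 \<le> card T" using cT tau by simp
      then obtain a b where ab: "a \<in> T" "b \<in> T" "a \<noteq> b" using get2 by blast
      show ?thesis using caseB2[OF part ab fv] cS cT cU by simp
    next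
      assume "real \<sigma> = (real s - 1) / 2"
      then have "real (2 * \<sigma> + 1) = real s" by simp
      then have e: "2 * \<sigma> + 1 = s" by (simp only: of_nat_eq_iff)
      then have "1 \<le> card T" using cT tau by simp
      then obtain a where a: "a \<in> T" using get1 by blast
      have "1 \<le> card S" using e s1 cS by simp
      then obtain i where i: "i \<in> S" using get1 by blast
      show ?thesis using caseB1[OF part i a fv] cS cT cU by simp
    qed
  next
    assume "real \<sigma> = real s / 2"
    then have "real (2 * \<sigma>) = real s" by simp
    then have e: "2 * \<sigma> = s" by (simp only: of_nat_eq_iff)
    have "1 \<le> card S" using e s1 cS by simp
    then obtain a where a: "a \<in> S" using get1 by blast
    have "\<tau> = 0" using e tau by simp
    show "\<exists>g. fun_of_class m 0 (\<sigma> - 1) (\<tau> + 1) \<upsilon> (gr_act m g f)"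
      using caseC[OF part a fv] cS cT cU by simp
  qed
qed

end
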